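(* Assume $\mathfrak g$ is semisimple, $\Omega$ is a strongly dominant prime ideal of $\mathcal S$ and $\lambda=\lambda_\Omega$. If $w\in W$ and $w.\Omega=\Omega$, then $w(B_\lambda)=B_\lambda$.
   Context: $F$ is an algebraically closed field of characteristic zero; $\mathfrak g$ is a semisimple Lie algebra over $F$ with Cartan subalgebra $\mathfrak h$, root system $R$, positive system $R^+$, Weyl group $W$, $\rho=\frac12\sum_{\alpha\in R^+}\alpha$, dot action $w.\xi=w(\xi+\rho)-\rho$; $H_\alpha$ is the coroot of $\alpha$. $\mathcal S=S(\mathfrak h)$ is identified with polynomial functions on $\mathfrak h^*$, with $(w.f)(\xi)=f(w^{-1}.\xi)$ and $w.\Omega=\{w.f:f\in\Omega\}$; $\mathcal V(\Omega)$ is the zero set. For a prime $\Omega$, $\mathbb F$ is the fraction field of $\mathcal S/\Omega$, $\lambda_\Omega$ the $\mathbb F$-linear extension of $\mathfrak h\hookrightarrow\mathcal S\to\mathcal S/\Omega\hookrightarrow\mathbb F$. $P^+$ is the set of dominant integral weights; $\Omega$ is strongly dominant if $\mathcal V(\Omega)\cap P^+$ is Zariski dense in $\mathcal V(\Omega)$. For $\lambda=\lambda_\Omega$: $R_\lambda=\{\alpha\in R: H_\alpha-n\in\Omega\text{ for some }n\in\mathbb Z\}$, $R_\lambda^+=R^+\cap R_\lambda$, $B_\lambda$ the simple roots of $R_\lambda$ in $R_\lambda^+$. *)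

theory Defs
  imports "HOL-Algebra.Ideal"
begin

text \<open>The dual Cartan subalgebra h* is modelled as the coordinate space
  'n \<Rightarrow> 'a (F = 'a, 'n a finite index type, dim h* = CARD('n)); elements of h are
  likewise coefficient vectors, with pairing xi(H) = sum_i xi i * H i.
  The semisimple Lie algebra enters only through its root system R in h*, the
  coroots H_alpha = cor alpha in h, and a positive system Rpos.\<close>

definition alg_closed :: "'a::field itself \<Rightarrow> bool" where
  "alg_closed _ \<longleftrightarrow> (\<forall>(n::nat) (c::nat \<Rightarrow> 'a). n > 0 \<longrightarrow>
      (\<exists>x. x ^ n + (\<Sum>i<n. c i * x ^ i) = 0))"

definition pair :: "('n::finite \<Rightarrow> 'a::field) \<Rightarrow> ('n \<Rightarrow> 'a) \<Rightarrow> 'a" where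
  "pair xi H = (\<Sum>i\<in>UNIV. xi i * H i)"

definition reflection :: "(('n::finite \<Rightarrow> 'a::field) \<Rightarrow> ('n \<Rightarrow> 'a)) \<Rightarrow> ('n \<Rightarrow> 'a)
    \<Rightarrow> ('n \<Rightarrow> 'a) \<Rightarrow> ('n \<Rightarrow> 'a)" where
  "reflection cor \<alpha> xi = (\<lambda>i. xi i - pair xi (cor \<alpha>) * \<alpha> i)"

text \<open>Reduced (crystallographic) root system in h*, spanning h* (semisimplicity),
  with coroot map cor.\<close>
definition root_system :: "('n::finite \<Rightarrow> 'a::field_char_0) set \<Rightarrow> (('n \<Rightarrow> 'a) \<Rightarrow> ('n \<Rightarrow> 'a)) \<Rightarrow> bool" where
  "root_system R cor \<longleftrightarrow> finite R \<and> (\<lambda>i. 0) \<notin> R \<and>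
     (\<forall>xi. \<exists>c. xi = (\<lambda>i. \<Sum>\<alpha>\<in>R. c \<alpha> * \<alpha> i)) \<and>
     (\<forall>\<alpha>\<in>R. pair \<alpha> (cor \<alpha>) = 2) \<and>
     (\<forall>\<alpha>\<in>R. \<forall>\<beta>\<in>R. reflection cor \<alpha> \<beta> \<in> R) \<and>
     (\<forall>\<alpha>\<in>R. \<forall>\<beta>\<in>R. pair \<beta> (cor \<alpha>) \<in> \<int>) \<and>
     (\<forall>\<alpha>\<in>R. \<forall>c. (\<lambda>i. c * \<alpha> i) \<in> R \<longrightarrow> c = 1 \<or> c = -1)"

definition positive_system :: "('n::finite \<Rightarrow> 'a::field_char_0) set \<Rightarrow> ('n \<Rightarrow> 'a) set \<Rightarrow> bool" where
  "positive_system R Rpos \<longleftrightarrow> Rpos \<subseteq> R \<and> (\<exists>\<Delta>\<subseteq>R.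
     (\<forall>c. (\<lambda>i. \<Sum>\<delta>\<in>\<Delta>. c \<delta> * \<delta> i) = (\<lambda>i. 0) \<longrightarrow> (\<forall>\<delta>\<in>\<Delta>. c \<delta> = 0)) \<and>
     (\<forall>\<beta>\<in>R. \<exists>k::('n \<Rightarrow> 'a) \<Rightarrow> int. \<beta> = (\<lambda>i. \<Sum>\<delta>\<in>\<Delta>. of_int (k \<delta>) * \<delta> i) \<and>
        (((\<forall>\<delta>\<in>\<Delta>. k \<delta> \<ge> 0) \<and> \<beta> \<in> Rpos) \<or> ((\<forall>\<delta>\<in>\<Delta>. k \<delta> \<le> 0) \<and> \<beta> \<notin> Rpos))))"

inductive_set weyl_group :: "('n::finite \<Rightarrow> 'a::field) set \<Rightarrow> (('n \<Rightarrow> 'a) \<Rightarrow> ('n \<Rightarrow> 'a))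
    \<Rightarrow> (('n \<Rightarrow> 'a) \<Rightarrow> ('n \<Rightarrow> 'a)) set" for R cor where
  weyl_id: "id \<in> weyl_group R cor"
| weyl_step: "\<alpha> \<in> R \<Longrightarrow> w \<in> weyl_group R cor \<Longrightarrow> reflection cor \<alpha> \<circ> w \<in> weyl_group R cor"

definition rho :: "('n::finite \<Rightarrow> 'a::field) set \<Rightarrow> ('n \<Rightarrow> 'a)" where
  "rho Rpos = (\<lambda>i. (\<Sum>\<alpha>\<in>Rpos. \<alpha> i) / 2)"

definition dot :: "('n::finite \<Rightarrow> 'a::field) set \<Rightarrow> (('n \<Rightarrow> 'a) \<Rightarrow> ('n \<Rightarrow> 'a)) \<Rightarrow> ('n \<Rightarrow> 'a) \<Rightarrow> ('n \<Rightarrow> 'a)" where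
  "dot Rpos w xi = (\<lambda>i. w (\<lambda>j. xi j + rho Rpos j) i - rho Rpos i)"

text \<open>S = S(h), identified with polynomial functions on h*.\<close>
inductive_set polyfun :: "(('n::finite \<Rightarrow> 'a::field) \<Rightarrow> 'a) set" where
  pf_const: "(\<lambda>xi. c) \<in> polyfun"
| pf_coord: "(\<lambda>xi. xi i) \<in> polyfun"
| pf_add: "f \<in> polyfun \<Longrightarrow> g \<in> polyfun \<Longrightarrow> (\<lambda>xi. f xi + g xi) \<in> polyfun"
| pf_mult: "f \<in> polyfun \<Longrightarrow> g \<in> polyfun \<Longrightarrow> (\<lambda>xi. f xi * g xi) \<in> polyfun"

definition S_ring :: "(('n::finite \<Rightarrow> 'a::field) \<Rightarrow> 'a) ring" where
  "S_ring = \<lparr>carrier = polyfun, monoid.mult = (\<lambda>f g xi. f xi * g xi), one = (\<lambda>xi. 1),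
             ring.zero = (\<lambda>xi. 0), ring.add = (\<lambda>f g xi. f xi + g xi)\<rparr>"

definition act_ideal :: "('n::finite \<Rightarrow> 'a::field) set \<Rightarrow> (('n \<Rightarrow> 'a) \<Rightarrow> ('n \<Rightarrow> 'a))
    \<Rightarrow> (('n \<Rightarrow> 'a) \<Rightarrow> 'a) set \<Rightarrow> (('n \<Rightarrow> 'a) \<Rightarrow> 'a) set" where
  "act_ideal Rpos w \<Omega> = (\<lambda>f. \<lambda>xi. f (dot Rpos (inv_into UNIV w) xi)) ` \<Omega>"

definition zero_set :: "(('n::finite \<Rightarrow> 'a::field) \<Rightarrow> 'a) set \<Rightarrow> ('n \<Rightarrow> 'a) set" where
  "zero_set \<Omega> = {xi. \<forall>f\<in>\<Omega>. f xi = 0}"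

definition dominant_integral :: "('n::finite \<Rightarrow> 'a::field_char_0) set \<Rightarrow> (('n \<Rightarrow> 'a) \<Rightarrow> ('n \<Rightarrow> 'a)) \<Rightarrow> ('n \<Rightarrow> 'a) set" where
  "dominant_integral Rpos cor = {xi. \<forall>\<alpha>\<in>Rpos. pair xi (cor \<alpha>) \<in> \<nat>}"

definition zariski_dense_in :: "('n::finite \<Rightarrow> 'a::field) set \<Rightarrow> ('n \<Rightarrow> 'a) set \<Rightarrow> bool" where
  "zariski_dense_in A B \<longleftrightarrow> A \<subseteq> B \<and>
     (\<forall>f\<in>(polyfun :: (('n \<Rightarrow> 'a) \<Rightarrow> 'a) set). (\<forall>xi\<in>A. f xi = 0) \<longrightarrow> (\<forall>xi\<in>B. f xi = 0))"

definition strongly_dominant :: "('n::finite \<Rightarrow> 'a::field_char_0) set \<Rightarrow> (('n \<Rightarrow> 'a) \<Rightarrow> ('n \<Rightarrow> 'a))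
    \<Rightarrow> (('n \<Rightarrow> 'a) \<Rightarrow> 'a) set \<Rightarrow> bool" where
  "strongly_dominant Rpos cor \<Omega> \<longleftrightarrow>
     zariski_dense_in (zero_set \<Omega> \<inter> dominant_integral Rpos cor) (zero_set \<Omega>)"

definition integral_roots :: "('n::finite \<Rightarrow> 'a::field) set \<Rightarrow> (('n \<Rightarrow> 'a) \<Rightarrow> ('n \<Rightarrow> 'a))
    \<Rightarrow> (('n \<Rightarrow> 'a) \<Rightarrow> 'a) set \<Rightarrow> ('n \<Rightarrow> 'a) set" where
  "integral_roots R cor \<Omega> = {\<alpha>\<in>R. \<exists>n::int. (\<lambda>xi. pair xi (cor \<alpha>) - of_int n) \<in> \<Omega>}"

definition simple_roots :: "('n \<Rightarrow> 'a::field) set \<Rightarrow> ('n \<Rightarrow> 'a) set" where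
  "simple_roots P = {\<alpha>\<in>P. \<not> (\<exists>\<beta>\<in>P. \<exists>\<gamma>\<in>P. \<alpha> = (\<lambda>i. \<beta> i + \<gamma> i))}"

definition B_lambda :: "('n::finite \<Rightarrow> 'a::field) set \<Rightarrow> ('n \<Rightarrow> 'a) set \<Rightarrow> (('n \<Rightarrow> 'a) \<Rightarrow> ('n \<Rightarrow> 'a))
    \<Rightarrow> (('n \<Rightarrow> 'a) \<Rightarrow> 'a) set \<Rightarrow> ('n \<Rightarrow> 'a) set" where
  "B_lambda R Rpos cor \<Omega> = simple_roots (integral_roots R cor \<Omega> \<inter> Rpos)"

end

theory Submission
  imports Defs "HOL-Library.Function_Algebras" "HOL-Computational_Algebra.Polynomial"
begin

inductive_set pfS :: "'n set \<Rightarrow> (('n \<Rightarrow> 'a::field_char_0) \<Rightarrow> 'a) set" for S where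
  pfS_const: "(\<lambda>xi. c) \<in> pfS S"
| pfS_var: "i \<in> S \<Longrightarrow> (\<lambda>xi. xi i) \<in> pfS S"
| pfS_add: "f \<in> pfS S \<Longrightarrow> g \<in> pfS S \<Longrightarrow> f + g \<in> pfS S"
| pfS_mult: "f \<in> pfS S \<Longrightarrow> g \<in> pfS S \<Longrightarrow> f * g \<in> pfS S"

lemma pfS_0: "0 \<in> pfS S"
  using pfS_const[of 0 S] by (simp add: zero_fun_def)

lemma pfS_1: "1 \<in> pfS S"
  using pfS_const[of 1 S] by (simp add: one_fun_def)

lemma pfS_uminus: "f \<in> pfS S \<Longrightarrow> - f \<in> pfS S"
proof -
  assume "f \<in> pfS S"
  then have "(\<lambda>xi. -1) * f \<in> pfS S" by (intro pfS_mult pfS_const)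
  moreover have "(\<lambda>xi. -1) * f = - f" by (rule ext) simp
  ultimately show ?thesis by simp
qed

lemma pfS_diff: "f \<in> pfS S \<Longrightarrow> g \<in> pfS S \<Longrightarrow> f - g \<in> pfS S"
  using pfS_add[OF _ pfS_uminus, of f S g] by simp

lemma pfS_sum: "(\<And>i. i \<in> A \<Longrightarrow> f i \<in> pfS S) \<Longrightarrow> (\<Sum>i\<in>A. f i) \<in> pfS S"
  by (induction A rule: infinite_finite_induct) (auto intro: pfS_0 pfS_add)

lemma pfS_power: "f \<in> pfS S \<Longrightarrow> f ^ n \<in> pfS S"
  by (induction n) (auto intro: pfS_1 pfS_mult)

lemma pfS_mono: "f \<in> pfS S \<Longrightarrow> S \<subseteq> T \<Longrightarrow> f \<in> pfS T"
  by (induction f rule: pfS.induct) (auto intro: pfS.intros)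

lemma pfS_dep: "f \<in> pfS S \<Longrightarrow> (\<forall>i\<in>S. x i = y i) \<Longrightarrow> f x = f y"
  by (induction f rule: pfS.induct) auto

lemma pfS_UNIV: "pfS UNIV = (polyfun :: (('n::finite \<Rightarrow> 'a::field_char_0) \<Rightarrow> 'a) set)"
proof (rule Set.set_eqI, rule iffI)
  fix f :: "('n \<Rightarrow> 'a) \<Rightarrow> 'a" assume "f \<in> pfS UNIV"
  then show "f \<in> polyfun"
    by (induction f rule: pfS.induct)
       (auto intro: polyfun.intros simp: plus_fun_def times_fun_def)
next
  fix f :: "('n \<Rightarrow> 'a) \<Rightarrow> 'a" assume "f \<in> polyfun"
  then show "f \<in> pfS UNIV"
  proof (induction f rule: polyfun.induct)
    case (pf_add f g) then show ?case using pfS_add[of f UNIV g] by (simp add: plus_fun_def)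
  next
    case (pf_mult f g) then show ?case using pfS_mult[of f UNIV g] by (simp add: times_fun_def)
  qed (auto intro: pfS.intros)
qed

lemma pfS_empty: "f \<in> pfS {} \<Longrightarrow> \<exists>c. f = (\<lambda>_. c)"
  by (induction f rule: pfS.induct) (auto simp: plus_fun_def times_fun_def)

definition cS :: "'n set \<Rightarrow> (('n \<Rightarrow> 'a::field_char_0) \<Rightarrow> 'a) poly \<Rightarrow> bool" where
  "cS S Q \<longleftrightarrow> (\<forall>m. coeff Q m \<in> pfS S)"

lemma cS_0: "cS S 0" by (simp add: cS_def pfS_0)
lemma cS_const: "c \<in> pfS S \<Longrightarrow> cS S [:c:]" by (simp add: cS_def coeff_pCons pfS_0 split: nat.split)
lemma cS_pCons: "cS S (pCons a Q) \<longleftrightarrow> a \<in> pfS S \<and> cS S Q"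
  by (auto simp: cS_def coeff_pCons split: nat.splits)
lemma cS_add: "cS S P \<Longrightarrow> cS S Q \<Longrightarrow> cS S (P + Q)" by (simp add: cS_def pfS_add)
lemma cS_uminus: "cS S P \<Longrightarrow> cS S (- P)" by (simp add: cS_def pfS_uminus)
lemma cS_diff: "cS S P \<Longrightarrow> cS S Q \<Longrightarrow> cS S (P - Q)" by (simp add: cS_def pfS_diff)
lemma cS_mult: "cS S P \<Longrightarrow> cS S Q \<Longrightarrow> cS S (P * Q)"
  by (simp add: cS_def coeff_mult pfS_sum pfS_mult)
lemma cS_smult: "c \<in> pfS S \<Longrightarrow> cS S Q \<Longrightarrow> cS S (smult c Q)" by (simp add: cS_def pfS_mult)
lemma cS_monom: "c \<in> pfS S \<Longrightarrow> cS S (monom c n)" by (simp add: cS_def coeff_monom pfS_0)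
lemma cS_power: "cS S P \<Longrightarrow> cS S (P ^ n)"
  by (induction n) (auto intro: cS_mult simp: one_pCons cS_const pfS_1)

lemma rep: "f \<in> pfS (insert j S) \<Longrightarrow> \<exists>Q. cS S Q \<and> f = poly Q (\<lambda>x. x j)"
proof (induction f rule: pfS.induct)
  case (pfS_const c)
  show ?case by (rule exI[of _ "[:(\<lambda>_. c):]"]) (simp add: cS_const pfS.pfS_const)
next
  case (pfS_var i)
  show ?case
  proof (cases "i = j")
    case True
    show ?thesis by (rule exI[of _ "[:0, 1:]"]) (simp add: True cS_pCons pfS_0 pfS_1 cS_0)
  next
    case False
    then have "i \<in> S" using pfS_var by auto
    then show ?thesis by (intro exI[of _ "[:(\<lambda>x. x i):]"]) (simp add: cS_const pfS.pfS_var)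
  qed
next
  case (pfS_add f g)
  then obtain P Q where "cS S P" "f = poly P (\<lambda>x. x j)" "cS S Q" "g = poly Q (\<lambda>x. x j)" by blast
  then show ?case by (intro exI[of _ "P + Q"]) (simp add: cS_add)
next
  case (pfS_mult f g)
  then obtain P Q where "cS S P" "f = poly P (\<lambda>x. x j)" "cS S Q" "g = poly Q (\<lambda>x. x j)" by blast
  then show ?case by (intro exI[of _ "P * Q"]) (simp add: cS_mult)
qed

lemma rep_inv: "cS S Q \<Longrightarrow> poly Q (\<lambda>x. x j) \<in> pfS (insert j S)"
proof (induction Q)
  case (pCons a Q)
  then have "a \<in> pfS (insert j S)" "poly Q (\<lambda>x. x j) \<in> pfS (insert j S)"
    using pfS_mono[of _ S "insert j S"] by (auto simp: cS_pCons)
  moreover have "poly (pCons a Q) (\<lambda>x. x j) = a + (\<lambda>x. x j) * poly Q (\<lambda>x. x j)" by simp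
  ultimately show ?case by (metis pfS_add pfS_mult pfS_var insertI1)
qed (simp add: pfS_0)

definition sp :: "'x \<Rightarrow> ('x \<Rightarrow> 'a::field_char_0) poly \<Rightarrow> 'a poly" where
  "sp x Q = map_poly (\<lambda>c. c x) Q"

lemma poly_sp: "poly (sp x Q) t = poly Q (\<lambda>_. t) x"
  by (induction Q) (auto simp: sp_def map_poly_pCons)

lemma coeff_sp: "coeff (sp x Q) m = coeff Q m x"
  by (simp add: sp_def coeff_map_poly)

lemma sp_add: "sp x (P + Q) = sp x P + sp x Q"
  by (simp add: poly_eq_poly_eq_iff[symmetric] fun_eq_iff poly_sp)
lemma sp_diff: "sp x (P - Q) = sp x P - sp x Q"
  by (simp add: poly_eq_poly_eq_iff[symmetric] fun_eq_iff poly_sp)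
lemma sp_mult: "sp x (P * Q) = sp x P * sp x Q"
  by (simp add: poly_eq_poly_eq_iff[symmetric] fun_eq_iff poly_sp)
lemma sp_smult: "sp x (smult c Q) = smult (c x) (sp x Q)"
  by (simp add: poly_eq_poly_eq_iff[symmetric] fun_eq_iff poly_sp)
lemma sp_power: "sp x (Q ^ n) = (sp x Q) ^ n"
  by (induction n) (simp_all add: sp_mult, simp add: sp_def)
lemma sp_0: "sp x 0 = 0" by (simp add: sp_def)

lemma poly_spec: "j \<notin> S \<Longrightarrow> cS S Q \<Longrightarrow> poly Q (\<lambda>x. x j) (xi(j:=t)) = poly (sp xi Q) t"
proof (induction Q)
  case (pCons a Q)
  then have 1: "a (xi(j:=t)) = a xi" by (intro pfS_dep[of a S]) (auto simp: cS_pCons)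
  have 2: "poly (pCons a Q) (\<lambda>x. x j) (xi(j:=t)) = a (xi(j:=t)) + t * poly Q (\<lambda>x. x j) (xi(j:=t))"
    by simp
  have 3: "sp xi (pCons a Q) = pCons (a xi) (sp xi Q)" by (simp add: sp_def map_poly_pCons)
  have 4: "poly Q (\<lambda>x. x j) (xi(j:=t)) = poly (sp xi Q) t"
    using pCons.IH[OF pCons.prems(1)] pCons.prems(2) by (simp only: cS_pCons)
  show ?case unfolding 2 3 1 4 by simp
qed (simp add: sp_def)

lemma coeff_ge_zero_imp: "(\<forall>m\<ge>n. coeff Q m = 0) \<Longrightarrow> Q = 0 \<or> degree Q < n"
  by (metis coeff_0 leading_coeff_0_iff linorder_not_le)

lemma pow_apply: "(f ^ n) x = (f x) ^ n"
  by (induction n) auto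

lemma pdiv_aux:
  fixes Qf :: "(('n \<Rightarrow> 'a::field_char_0) \<Rightarrow> 'a) poly"
  assumes cf: "cS S Qf"
  shows "\<forall>Qp :: (('n \<Rightarrow> 'a) \<Rightarrow> 'a) poly. cS S Qp \<longrightarrow> (Qp = 0 \<or> degree Qp < N) \<longrightarrow> (\<exists>e Qq Qr. cS S Qq \<and> cS S Qr \<and>
     smult (lead_coeff Qf ^ e) Qp = Qq * Qf + Qr \<and> (Qr = 0 \<or> degree Qr < degree Qf))"
proof (induction N)
  case 0
  show ?case by (auto intro!: exI[of _ 0] simp: cS_0)
next
  case (Suc N)
  show ?case
  proof (intro allI impI)
    fix Qp :: "(('n \<Rightarrow> 'a) \<Rightarrow> 'a) poly" assume cp: "cS S Qp" and dp: "Qp = 0 \<or> degree Qp < Suc N"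
    show "\<exists>e Qq Qr. cS S Qq \<and> cS S Qr \<and>
     smult (lead_coeff Qf ^ e) Qp = Qq * Qf + Qr \<and> (Qr = 0 \<or> degree Qr < degree Qf)"
    proof (cases "Qp = 0 \<or> degree Qp < degree Qf")
      case True
      then show ?thesis using cp by (intro exI[of _ 0] exI[of _ 0] exI[of _ Qp]) (auto simp: cS_0)
    next
      case False
      define n where "n = degree Qp"
      define d where "d = degree Qf"
      define lc where "lc = lead_coeff Qf"
      define a where "a = lead_coeff Qp"
      have nd: "d \<le> n" "n \<le> N" using False dp by (auto simp: n_def d_def)
      define Qp' where "Qp' = smult lc Qp - monom a (n - d) * Qf"
      have lcS: "lc \<in> pfS S" "a \<in> pfS S" using cf cp by (auto simp: cS_def lc_def a_def)
      have cp': "cS S Qp'" unfolding Qp'_def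
        by (intro cS_diff cS_smult cS_mult cS_monom lcS cp cf)
      have "\<forall>m\<ge>n. coeff Qp' m = 0"
      proof (intro allI impI)
        fix m assume "n \<le> m"
        show "coeff Qp' m = 0"
        proof (cases "m = n")
          case True
          then show ?thesis using nd
            by (simp add: Qp'_def coeff_monom_mult lc_def a_def n_def d_def)
        next
          case False
          then have "m > n" using \<open>n \<le> m\<close> by simp
          then have "coeff Qp m = 0" "coeff Qf (m - (n - d)) = 0"
            using nd by (auto simp: n_def d_def intro!: coeff_eq_0)
          then show ?thesis using \<open>m > n\<close> by (simp add: Qp'_def coeff_monom_mult)
        qed
      qed
      then have "Qp' = 0 \<or> degree Qp' < n" by (rule coeff_ge_zero_imp)
      then have "Qp' = 0 \<or> degree Qp' < N"
        using nd False by (auto simp: n_def d_def)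
      then obtain e Qq Qr where IH: "cS S Qq" "cS S Qr"
        "smult (lc ^ e) Qp' = Qq * Qf + Qr" "Qr = 0 \<or> degree Qr < degree Qf"
        using Suc.IH cp' unfolding lc_def by blast
      have "smult (lc ^ Suc e) Qp = smult (lc ^ e) (Qp' + monom a (n - d) * Qf)"
        by (simp add: Qp'_def mult.commute)
      also have "\<dots> = (Qq + smult (lc ^ e) (monom a (n - d))) * Qf + Qr"
        using IH(3) by (simp add: algebra_simps smult_add_right)
      finally show ?thesis
        using IH lcS by (intro exI[of _ "Suc e"] exI[of _ "Qq + smult (lc ^ e) (monom a (n - d))"] exI[of _ Qr])
           (auto intro!: cS_add cS_smult cS_monom pfS_power simp: lc_def)
    qed
  qed
qed

lemma pdiv:
  fixes Qf Qp :: "(('n \<Rightarrow> 'a::field_char_0) \<Rightarrow> 'a) poly"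
  assumes "cS S Qf" "cS S Qp"
  shows "\<exists>e Qq Qr. cS S Qq \<and> cS S Qr \<and>
     smult (lead_coeff Qf ^ e) Qp = Qq * Qf + Qr \<and> (Qr = 0 \<or> degree Qr < degree Qf)"
  using pdiv_aux[OF assms(1), of "Suc (degree Qp)"] assms(2) by auto

lemma ac_root:
  assumes ac: "alg_closed TYPE('a::field)" and dp: "degree (p::'a poly) > 0"
  shows "\<exists>x. poly p x = 0"
proof -
  define n where "n = degree p"
  define lc where "lc = lead_coeff p"
  have lc0: "lc \<noteq> 0" using dp by (auto simp: lc_def)
  obtain x where x: "x ^ n + (\<Sum>i<n. (coeff p i / lc) * x ^ i) = 0"
    using ac[unfolded alg_closed_def, rule_format, of n "\<lambda>i. coeff p i / lc"] dp n_def by auto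
  have "poly p x = (\<Sum>i<Suc n. coeff p i * x ^ i)"
    by (simp only: poly_altdef n_def lessThan_Suc_atMost)
  also have "\<dots> = (\<Sum>i<n. coeff p i * x ^ i) + lc * x ^ n"
    by (simp add: lc_def n_def)
  also have "\<dots> = lc * (x ^ n + (\<Sum>i<n. (coeff p i / lc) * x ^ i))"
    using lc0 by (simp add: algebra_simps sum_distrib_left)
  finally show ?thesis using x by auto
qed

lemma roots_dvd:
  assumes ac: "alg_closed TYPE('a::field)"
  shows "(p::'a poly) \<noteq> 0 \<Longrightarrow> (\<forall>x. poly p x = 0 \<longrightarrow> poly q x = 0) \<Longrightarrow> p dvd q ^ degree p"
proof (induction "degree p" arbitrary: p)
  case 0
  then have "is_unit p" by (simp add: is_unit_iff_degree)
  then show ?case by (simp add: unit_imp_dvd)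
next
  case (Suc n)
  then obtain a where a: "poly p a = 0" using ac_root[OF ac, of p] by auto
  then obtain p1 where p1: "p = [:-a, 1:] * p1" using poly_eq_0_iff_dvd by (metis dvdE)
  have p10: "p1 \<noteq> 0" using Suc.prems p1 by auto
  have "degree p = degree [:-a, 1:] + degree p1"
    unfolding p1 by (rule degree_mult_eq) (use p10 in auto)
  then have dp1: "degree p1 = n" using Suc.hyps by simp
  have "\<forall>x. poly p1 x = 0 \<longrightarrow> poly q x = 0" using Suc.prems p1 by auto
  then have "p1 dvd q ^ n" using Suc.hyps(1)[of p1] dp1 p10 by auto
  moreover have "[:-a, 1:] dvd q" using Suc.prems a by (simp add: poly_eq_0_iff_dvd)
  ultimately have "[:-a, 1:] * p1 dvd q * q ^ n" by (metis mult_dvd_mono)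
  then show ?case using p1 Suc.hyps(2)[symmetric] by (simp only: power_Suc)
qed

definition myprime :: "'n set \<Rightarrow> (('n \<Rightarrow> 'a::field_char_0) \<Rightarrow> 'a) set \<Rightarrow> bool" where
  "myprime S P \<longleftrightarrow> P \<subseteq> pfS S \<and> 0 \<in> P \<and> (\<forall>f\<in>P. \<forall>g\<in>P. f + g \<in> P) \<and>
     (\<forall>f\<in>P. \<forall>g\<in>pfS S. g * f \<in> P) \<and> 1 \<notin> P \<and>
     (\<forall>f\<in>pfS S. \<forall>g\<in>pfS S. f * g \<in> P \<longrightarrow> f \<in> P \<or> g \<in> P)"

lemma mp_sub: "myprime S P \<Longrightarrow> f \<in> P \<Longrightarrow> f \<in> pfS S" by (auto simp: myprime_def)
lemma mp_0: "myprime S P \<Longrightarrow> 0 \<in> P" by (auto simp: myprime_def)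
lemma mp_1: "myprime S P \<Longrightarrow> 1 \<notin> P" by (auto simp: myprime_def)
lemma mp_add: "myprime S P \<Longrightarrow> f \<in> P \<Longrightarrow> g \<in> P \<Longrightarrow> f + g \<in> P" by (auto simp: myprime_def)
lemma mp_multl: "myprime S P \<Longrightarrow> f \<in> P \<Longrightarrow> g \<in> pfS S \<Longrightarrow> g * f \<in> P" by (auto simp: myprime_def)
lemma mp_multr: "myprime S P \<Longrightarrow> f \<in> P \<Longrightarrow> g \<in> pfS S \<Longrightarrow> f * g \<in> P"
  using mp_multl[of S P f g] by (simp add: mult.commute)
lemma mp_prime: "myprime S P \<Longrightarrow> f \<in> pfS S \<Longrightarrow> g \<in> pfS S \<Longrightarrow> f * g \<in> P \<Longrightarrow> f \<in> P \<or> g \<in> P"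
  by (auto simp: myprime_def)
lemma mp_uminus: "myprime S P \<Longrightarrow> f \<in> P \<Longrightarrow> - f \<in> P"
  using mp_multl[of S P f "- 1"] pfS_uminus[OF pfS_1, of S] by simp
lemma mp_diff: "myprime S P \<Longrightarrow> f \<in> P \<Longrightarrow> g \<in> P \<Longrightarrow> f - g \<in> P"
  using mp_add[of S P f "- g"] mp_uminus[of S P g] by simp
lemma mp_pow: "myprime S P \<Longrightarrow> f \<in> pfS S \<Longrightarrow> f ^ n \<in> P \<Longrightarrow> f \<in> P"
proof (induction n)
  case 0 then show ?case by (metis mp_1 power_0)
next
  case (Suc n)
  have "f * f ^ n \<in> P" using Suc.prems(3) by (simp only: power_Suc)
  then have "f \<in> P \<or> f ^ n \<in> P" by (rule mp_prime[OF Suc.prems(1) Suc.prems(2) pfS_power[OF Suc.prems(2)]])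
  then show ?case using Suc.IH Suc.prems by blast
qed

lemma mp_restrict:
  fixes P :: "(('n \<Rightarrow> 'a::field_char_0) \<Rightarrow> 'a) set"
  assumes "myprime (insert j S) P"
  shows "myprime S (P \<inter> pfS S)"
proof -
  have m: "f \<in> pfS S \<Longrightarrow> f \<in> pfS (insert j S)" for f using pfS_mono[of f S "insert j S"] by blast
  show ?thesis unfolding myprime_def
  proof (intro conjI ballI impI)
    show "0 \<in> P \<inter> pfS S" using mp_0[OF assms] pfS_0 by blast
    show "1 \<notin> P \<inter> pfS S" using mp_1[OF assms] by blast
  next
    fix f g :: "('n \<Rightarrow> 'a) \<Rightarrow> 'a" assume "f \<in> P \<inter> pfS S" "g \<in> P \<inter> pfS S"
    then show "f + g \<in> P \<inter> pfS S" using mp_add[OF assms] pfS_add by blast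
  next
    fix f g :: "('n \<Rightarrow> 'a) \<Rightarrow> 'a" assume "f \<in> P \<inter> pfS S" "g \<in> pfS S"
    then show "g * f \<in> P \<inter> pfS S" using mp_multl[OF assms] pfS_mult m by blast
  next
    fix f g :: "('n \<Rightarrow> 'a) \<Rightarrow> 'a" assume "f \<in> pfS S" "g \<in> pfS S" "f * g \<in> P \<inter> pfS S"
    then show "f \<in> P \<inter> pfS S \<or> g \<in> P \<inter> pfS S" using mp_prime[OF assms] m by blast
  qed auto
qed

lemma inP:
  assumes "myprime (insert j S) P" "cS S Q" "\<forall>m. coeff Q m \<in> P"
  shows "poly Q (\<lambda>x. x j) \<in> P"
  using assms(2,3)
proof (induction Q)
  case 0 then show ?case using mp_0[OF assms(1)] by simp
next
  case (pCons a Q)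
  have a: "a \<in> P" using pCons.prems(2)[rule_format, of 0] by simp
  have "\<forall>m. coeff Q m \<in> P" using pCons.prems(2) by (metis coeff_pCons_Suc)
  then have q: "poly Q (\<lambda>x. x j) \<in> P" using pCons.IH pCons.prems(1) by (simp add: cS_pCons)
  have e: "poly (pCons a Q) (\<lambda>x. x j) = a + (\<lambda>x. x j) * poly Q (\<lambda>x. x j)" by (simp only: poly_pCons)
  show ?case unfolding e
    by (rule mp_add[OF assms(1) a mp_multl[OF assms(1) q pfS_var[OF insertI1]]])
qed

lemma NS_empty:
  assumes "myprime {} P" "h \<in> pfS {}" "h \<notin> P"
  shows "\<exists>x. (\<forall>f\<in>P. f x = 0) \<and> h x \<noteq> 0"
proof -
  obtain c where hc: "h = (\<lambda>_. c)" using pfS_empty assms(2) by blast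
  have "c \<noteq> 0" using assms(3) mp_0[OF assms(1)] hc by (auto simp: zero_fun_def)
  moreover have "f x = 0" if fP: "f \<in> P" for f x
  proof (rule ccontr)
    obtain a where fa: "f = (\<lambda>_. a)" using pfS_empty mp_sub[OF assms(1) fP] by blast
    assume "f x \<noteq> 0"
    then have "a \<noteq> 0" using fa by simp
    then have "(\<lambda>_. 1 / a) * f = 1" using fa by (auto simp: fun_eq_iff)
    moreover have "(\<lambda>_. 1 / a) * f \<in> P" using mp_multl[OF assms(1) fP pfS_const] .
    ultimately show False using mp_1[OF assms(1)] by simp
  qed
  ultimately show ?thesis using hc by auto
qed

lemma NS_step:
  fixes P :: "(('n \<Rightarrow> 'a::field_char_0) \<Rightarrow> 'a) set" and g :: "('n \<Rightarrow> 'a) \<Rightarrow> 'a"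
  assumes ac: "alg_closed TYPE('a)" and jS: "j \<notin> S"
   and IH: "\<And>(P' :: (('n \<Rightarrow> 'a) \<Rightarrow> 'a) set) h'. myprime S P' \<Longrightarrow> h' \<in> pfS S \<Longrightarrow> h' \<notin> P' \<Longrightarrow> \<exists>x. (\<forall>f\<in>P'. f x = 0) \<and> h' x \<noteq> 0"
   and mp: "myprime (insert j S) P" and gS: "g \<in> pfS (insert j S)" and gP: "g \<notin> P"
  shows "\<exists>x. (\<forall>f\<in>P. f x = 0) \<and> g x \<noteq> 0"
proof -
  define X where "X = (\<lambda>x::'n\<Rightarrow>'a. x j)"
  define J where "J = P \<inter> pfS S"
  have mJ: "myprime S J" using mp_restrict[OF mp] by (simp add: J_def)
  have XS: "X \<in> pfS (insert j S)" unfolding X_def by (rule pfS_var) simp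
  have inPJ: "poly Q X \<in> P" if "cS S Q" "\<forall>m. coeff Q m \<in> J" for Q
    using inP[OF mp that(1)] that(2) by (auto simp: J_def X_def)
  have spz: "sp x' Q = 0" if "\<forall>m. coeff Q m \<in> J" "\<forall>f\<in>J. f x' = 0" for Q x'
    by (rule poly_eqI) (use that in \<open>simp add: coeff_sp\<close>)
  have specX: "poly Q X (x'(j:=t)) = poly (sp x' Q) t" if "cS S Q" for Q x' t
    unfolding X_def by (rule poly_spec[OF jS that])
  have pfi: "poly Q X \<in> pfS (insert j S)" if "cS S Q" for Q
    unfolding X_def by (rule rep_inv[OF that])
  have mono: "f \<in> pfS (insert j S)" if "f \<in> pfS S" for f using pfS_mono[OF that] by blast
  define B where "B = {Q. cS S Q \<and> poly Q X \<in> P \<and> (\<exists>m. coeff Q m \<notin> J)}"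
  obtain Qg where cg: "cS S Qg" and gQ: "g = poly Qg X" using rep[OF gS] unfolding X_def by blast
  show ?thesis
  proof (cases "B = {}")
    case True
    have "\<exists>m0. coeff Qg m0 \<notin> J"
    proof (rule ccontr)
      assume "\<not> (\<exists>m0. coeff Qg m0 \<notin> J)"
      then have "g \<in> P" using inPJ[OF cg] gQ by auto
      then show False using gP by simp
    qed
    then obtain m0 where m0: "coeff Qg m0 \<notin> J" by blast
    have m0S: "coeff Qg m0 \<in> pfS S" using cg by (simp add: cS_def)
    obtain x' where x': "\<forall>f\<in>J. f x' = 0" "coeff Qg m0 x' \<noteq> 0" using IH[OF mJ m0S m0] by blast
    have "sp x' Qg \<noteq> 0" using x'(2) by (metis coeff_sp coeff_0)
    then have "finite {t. poly (sp x' Qg) t = 0}" by (rule poly_roots_finite)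
    then obtain t where t: "t \<notin> {t. poly (sp x' Qg) t = 0}"
      using ex_new_if_finite[OF infinite_UNIV_char_0] by blast
    show ?thesis
    proof (intro exI[of _ "x'(j:=t)"] conjI ballI)
      show "g (x'(j:=t)) \<noteq> 0" using t specX[OF cg] gQ by simp
    next
      fix f assume fP: "f \<in> P"
      obtain Qf where cf: "cS S Qf" and fQ: "f = poly Qf X"
        using rep[OF mp_sub[OF mp fP]] unfolding X_def by blast
      have "Qf \<notin> B" using True by simp
      then have "\<forall>m. coeff Qf m \<in> J" using cf fP fQ by (auto simp: B_def)
      then have "sp x' Qf = 0" using spz x'(1) by blast
      then show "f (x'(j:=t)) = 0" using specX[OF cf] fQ by simp
    qed
  next
    case False
    then obtain Q0 where "Q0 \<in> B" by blast
    then obtain Qf where QfB: "Qf \<in> B" and Qfmin: "\<And>Q. Q \<in> B \<Longrightarrow> degree Qf \<le> degree Q"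
      using ex_has_least_nat[of "\<lambda>Q. Q \<in> B" Q0 degree] by blast
    have cf: "cS S Qf" and fP: "poly Qf X \<in> P" using QfB by (auto simp: B_def)
    obtain m0 where m0: "coeff Qf m0 \<notin> J" using QfB by (auto simp: B_def)
    define d where "d = degree Qf"
    define lc where "lc = lead_coeff Qf"
    have lcS: "lc \<in> pfS S" using cf by (simp add: cS_def lc_def)
    have M: "\<forall>m. coeff Q m \<in> J" if "cS S Q" "poly Q X \<in> P" "Q = 0 \<or> degree Q < d" for Q
    proof (rule ccontr)
      assume "\<not> (\<forall>m. coeff Q m \<in> J)"
      then obtain m where m: "coeff Q m \<notin> J" by blast
      then have "Q \<in> B" using that by (auto simp: B_def)
      then have "degree Qf \<le> degree Q" by (rule Qfmin)
      moreover have "Q \<noteq> 0" using m mp_0[OF mJ] by auto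
      ultimately show False using that(3) by (simp add: d_def)
    qed
    have lcJ: "lc \<notin> J"
    proof
      assume lcJ: "lc \<in> J"
      then have lcP: "lc \<in> P" by (simp add: J_def)
      define Qf' where "Qf' = Qf - monom lc d"
      have cf': "cS S Qf'" unfolding Qf'_def by (intro cS_diff cf cS_monom lcS)
      have "poly Qf' X = poly Qf X - lc * X ^ d" by (simp add: Qf'_def poly_monom)
      also have "\<dots> \<in> P" by (rule mp_diff[OF mp fP mp_multr[OF mp lcP pfS_power[OF XS]]])
      finally have fP': "poly Qf' X \<in> P" .
      have "\<forall>m\<ge>d. coeff Qf' m = 0"
        by (auto simp: Qf'_def lc_def d_def coeff_eq_0)
      then have "Qf' = 0 \<or> degree Qf' < d" by (rule coeff_ge_zero_imp)
      then have "\<forall>m. coeff Qf' m \<in> J" by (rule M[OF cf' fP'])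
      then have "coeff Qf' m0 \<in> J" by blast
      then show False using m0 lcJ
        by (cases "m0 = d") (auto simp: Qf'_def coeff_monom lc_def d_def)
    qed
    have dpos: "0 < d"
    proof (rule ccontr)
      assume "\<not> 0 < d"
      then have "d = 0" by simp
      then have "poly Qf X = lc" by (simp add: poly_altdef lc_def d_def)
      then show False using fP lcS lcJ by (simp add: J_def)
    qed
    obtain e Qq Qr where pd: "cS S Qq" "cS S Qr" "smult (lc ^ e) (Qg ^ d) = Qq * Qf + Qr"
      "Qr = 0 \<or> degree Qr < d"
      using pdiv[OF cf cS_power[OF cg, of d]] unfolding lc_def d_def by blast
    have "\<exists>m1. coeff Qr m1 \<notin> J"
    proof (rule ccontr)
      assume "\<not> (\<exists>m1. coeff Qr m1 \<notin> J)"
      then have rP: "poly Qr X \<in> P" using inPJ[OF pd(2)] by auto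
      have "poly (smult (lc ^ e) (Qg ^ d)) X = poly Qq X * poly Qf X + poly Qr X"
        by (simp only: pd(3) poly_add poly_mult)
      moreover have "poly Qq X * poly Qf X + poly Qr X \<in> P"
        by (rule mp_add[OF mp mp_multl[OF mp fP pfi[OF pd(1)]] rP])
      ultimately have "lc ^ e * g ^ d \<in> P" by (simp only: poly_smult poly_power gQ)
      then have "lc ^ e \<in> P \<or> g ^ d \<in> P"
        by (rule mp_prime[OF mp pfS_power[OF mono[OF lcS]] pfS_power[OF gS], rotated])
      then have "lc \<in> P \<or> g \<in> P" using mp_pow[OF mp mono[OF lcS]] mp_pow[OF mp gS] by blast
      then show False using gP lcJ lcS by (auto simp: J_def)
    qed
    then obtain m1 where m1: "coeff Qr m1 \<notin> J" by blast
    have m1S: "coeff Qr m1 \<in> pfS S" using pd(2) by (simp add: cS_def)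
    have "lc * coeff Qr m1 \<notin> J" using mp_prime[OF mJ lcS m1S] lcJ m1 by blast
    then obtain x' where x'J: "\<forall>f\<in>J. f x' = 0" and hx': "(lc * coeff Qr m1) x' \<noteq> 0"
      using IH[OF mJ pfS_mult[OF lcS m1S]] by blast
    have lcx: "lc x' \<noteq> 0" "coeff Qr m1 x' \<noteq> 0" using hx' by auto
    define F where "F = sp x' Qf"
    define G where "G = sp x' Qg"
    define Rr where "Rr = sp x' Qr"
    define Qqb where "Qqb = sp x' Qq"
    have "degree F \<le> d"
      by (rule degree_le) (auto simp: F_def coeff_sp d_def coeff_eq_0)
    moreover have "d \<le> degree F"
      by (rule le_degree) (use lcx in \<open>simp add: F_def coeff_sp lc_def d_def\<close>)
    ultimately have degF: "degree F = d" by simp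
    have F0: "F \<noteq> 0" using degF dpos by auto
    have Qr0: "Qr \<noteq> 0" using m1 mp_0[OF mJ] by auto
    then have dQr: "degree Qr < d" using pd(4) by simp
    have Rr0: "Rr \<noteq> 0" using lcx(2) by (metis Rr_def coeff_sp coeff_0)
    have "degree Rr \<le> degree Qr"
      by (rule degree_le) (auto simp: Rr_def coeff_sp coeff_eq_0)
    then have degRr: "degree Rr < d" using dQr by simp
    have spid: "smult (lc x' ^ e) (G ^ d) = Qqb * F + Rr"
      using arg_cong[OF pd(3), of "sp x'"]
      by (simp add: sp_smult sp_power sp_add sp_mult pow_apply G_def Qqb_def F_def Rr_def)
    have "\<exists>t0. poly F t0 = 0 \<and> poly G t0 \<noteq> 0"
    proof (rule ccontr)
      assume "\<not> (\<exists>t0. poly F t0 = 0 \<and> poly G t0 \<noteq> 0)"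
      then have "\<forall>t. poly F t = 0 \<longrightarrow> poly G t = 0" by auto
      then have "F dvd G ^ degree F" by (rule roots_dvd[OF ac F0])
      then have "F dvd smult (lc x' ^ e) (G ^ d)" using degF by (simp add: dvd_smult)
      then have "F dvd smult (lc x' ^ e) (G ^ d) - Qqb * F" by (simp add: dvd_diff)
      then have "F dvd Rr" using spid by simp
      then have "degree F \<le> degree Rr" by (rule dvd_imp_degree_le[OF _ Rr0])
      then show False using degF degRr by simp
    qed
    then obtain t0 where t0: "poly F t0 = 0" "poly G t0 \<noteq> 0" by blast
    show ?thesis
    proof (intro exI[of _ "x'(j:=t0)"] conjI ballI)
      show "g (x'(j:=t0)) \<noteq> 0" using t0(2) specX[OF cg] gQ by (simp add: G_def)
    next
      fix p assume pP: "p \<in> P"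
      obtain Qp where cp: "cS S Qp" and pQ: "p = poly Qp X"
        using rep[OF mp_sub[OF mp pP]] unfolding X_def by blast
      obtain e' Qq' Qr' where pd': "cS S Qq'" "cS S Qr'" "smult (lc ^ e') Qp = Qq' * Qf + Qr'"
        "Qr' = 0 \<or> degree Qr' < d"
        using pdiv[OF cf cp] unfolding lc_def d_def by blast
      have "poly (smult (lc ^ e') Qp) X = poly Qq' X * poly Qf X + poly Qr' X"
        by (simp only: pd'(3) poly_add poly_mult)
      then have "poly Qr' X = lc ^ e' * p - poly Qq' X * poly Qf X"
        by (simp add: poly_smult pQ algebra_simps)
      also have "\<dots> \<in> P"
        by (rule mp_diff[OF mp mp_multl[OF mp pP pfS_power[OF mono[OF lcS]]] mp_multl[OF mp fP pfi[OF pd'(1)]]])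
      finally have "\<forall>m. coeff Qr' m \<in> J" using M[OF pd'(2) _ pd'(4)] by blast
      then have r0: "sp x' Qr' = 0" using spz x'J by blast
      have "smult (lc x' ^ e') (sp x' Qp) = sp x' Qq' * F"
        using arg_cong[OF pd'(3), of "sp x'"] r0
        by (simp add: sp_smult sp_add sp_mult pow_apply F_def)
      then have "lc x' ^ e' * poly (sp x' Qp) t0 = 0"
        using t0(1) by (metis poly_mult poly_smult mult_zero_right)
      then have "poly (sp x' Qp) t0 = 0" using lcx(1) by simp
      then show "p (x'(j:=t0)) = 0" using specX[OF cp] pQ by simp
    qed
  qed
qed

lemma NS_all:
  fixes P :: "(('n \<Rightarrow> 'a::field_char_0) \<Rightarrow> 'a) set"
  assumes ac: "alg_closed TYPE('a)"
  shows "finite S \<Longrightarrow> myprime S P \<Longrightarrow> h \<in> pfS S \<Longrightarrow> h \<notin> P \<Longrightarrow> \<exists>x. (\<forall>f\<in>P. f x = 0) \<and> h x \<noteq> 0"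
proof (induction S arbitrary: P h rule: finite_induct)
  case empty
  then show ?case by (rule NS_empty)
next
  case (insert j S)
  show ?case by (rule NS_step[OF ac insert.hyps(2) insert.IH insert.prems])
qed

lemma prime_has_zero:
  fixes \<Omega> :: "(('n::finite \<Rightarrow> 'a::field_char_0) \<Rightarrow> 'a) set"
  assumes ac: "alg_closed TYPE('a)" and pr: "primeideal \<Omega> S_ring"
  shows "\<exists>x. x \<in> zero_set \<Omega>"
proof -
  interpret primeideal \<Omega> S_ring by (rule pr)
  have car: "carrier (S_ring :: (('n \<Rightarrow> 'a) \<Rightarrow> 'a) ring) = pfS UNIV" by (simp add: S_ring_def pfS_UNIV)
  have mul: "f \<otimes>\<^bsub>(S_ring :: (('n \<Rightarrow> 'a) \<Rightarrow> 'a) ring)\<^esub> g = f * g" for f g by (simp add: S_ring_def times_fun_def)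
  have add: "f \<oplus>\<^bsub>(S_ring :: (('n \<Rightarrow> 'a) \<Rightarrow> 'a) ring)\<^esub> g = f + g" for f g by (simp add: S_ring_def plus_fun_def)
  have one: "\<one>\<^bsub>(S_ring :: (('n \<Rightarrow> 'a) \<Rightarrow> 'a) ring)\<^esub> = 1" by (simp add: S_ring_def one_fun_def)
  have zero: "\<zero>\<^bsub>(S_ring :: (('n \<Rightarrow> 'a) \<Rightarrow> 'a) ring)\<^esub> = 0" by (simp add: S_ring_def zero_fun_def)
  have mp: "myprime UNIV \<Omega>" unfolding myprime_def
  proof (intro conjI ballI impI)
    show "\<Omega> \<subseteq> pfS UNIV" using a_subset car by (simp only:)
    show "0 \<in> \<Omega>" using additive_subgroup.zero_closed[OF is_additive_subgroup] zero by simp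
    show "1 \<notin> \<Omega>" using one_imp_carrier I_notcarr one by auto
  next
    fix f g :: "('n \<Rightarrow> 'a) \<Rightarrow> 'a" assume "f \<in> \<Omega>" "g \<in> \<Omega>"
    then show "f + g \<in> \<Omega>" using additive_subgroup.a_closed[OF is_additive_subgroup] add by metis
  next
    fix f g :: "('n \<Rightarrow> 'a) \<Rightarrow> 'a" assume "f \<in> \<Omega>" "g \<in> pfS UNIV"
    then show "g * f \<in> \<Omega>" using I_l_closed mul car by metis
  next
    fix f g :: "('n \<Rightarrow> 'a) \<Rightarrow> 'a" assume "f \<in> pfS UNIV" "g \<in> pfS UNIV" "f * g \<in> \<Omega>"
    then show "f \<in> \<Omega> \<or> g \<in> \<Omega>" using I_prime mul car by metis
  qed
  obtain x where "\<forall>f\<in>\<Omega>. f x = 0" "1 x \<noteq> (0::'a)"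
    using NS_all[OF ac finite_UNIV mp pfS_1] mp_1[OF mp] by blast
  then show ?thesis by (auto simp: zero_set_def)
qed

lemma pair_add1: "pair (\<lambda>i. x i + y i) H = pair x H + pair y H"
  by (simp add: pair_def algebra_simps sum.distrib)
lemma pair_lin1: "pair (\<lambda>i. x i - c * y i) H = pair x H - c * pair y H"
  by (simp add: pair_def algebra_simps sum_subtractf sum_distrib_left)
lemma pair_lin1p: "pair (\<lambda>i. x i + c * y i) H = pair x H + c * pair y H"
  by (simp add: pair_def algebra_simps sum.distrib sum_distrib_left)
lemma pair_scale1: "pair (\<lambda>i. c * x i) H = c * pair x H"
  by (simp add: pair_def algebra_simps sum_distrib_left)
lemma pair_neg1: "pair (\<lambda>i. - x i) H = - pair x H"
  by (simp add: pair_def sum_negf)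
lemma pair_neg2: "pair x (\<lambda>i. - H i) = - pair x H"
  by (simp add: pair_def sum_negf)
lemma pair_lin2: "pair x (\<lambda>i. a i - c * b i) = pair x a - c * pair x b"
  by (simp add: pair_def algebra_simps sum_subtractf sum_distrib_left)
lemma pair_sum1: "pair (\<lambda>i. \<Sum>\<alpha>\<in>A. c \<alpha> * \<alpha> i) H = (\<Sum>\<alpha>\<in>A. c \<alpha> * pair \<alpha> H)"
  by (simp add: pair_def sum_distrib_left sum_distrib_right mult.assoc sum.swap[of _ A])

lemma refl_app: "reflection cor \<alpha> \<xi> i = \<xi> i - pair \<xi> (cor \<alpha>) * \<alpha> i"
  by (simp add: reflection_def)

lemma pair_refl: "pair (reflection cor \<alpha> \<xi>) H = pair \<xi> H - pair \<xi> (cor \<alpha>) * pair \<alpha> H"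
  unfolding reflection_def by (rule pair_lin1)

lemma refl_invol: "pair \<alpha> (cor \<alpha>) = 2 \<Longrightarrow> reflection cor \<alpha> (reflection cor \<alpha> \<xi>) = \<xi>"
  by (rule ext) (simp add: refl_app pair_refl algebra_simps)

lemma refl_add: "reflection cor \<alpha> (\<lambda>i. x i + y i) = (\<lambda>i. reflection cor \<alpha> x i + reflection cor \<alpha> y i)"
  unfolding reflection_def by (rule ext) (simp add: pair_add1 algebra_simps)
lemma refl_scale: "reflection cor \<alpha> (\<lambda>i. c * x i) = (\<lambda>i. c * reflection cor \<alpha> x i)"
  unfolding reflection_def by (rule ext) (simp add: pair_scale1 algebra_simps)
lemma refl_lin: "reflection cor \<alpha> (\<lambda>i. x i - c * y i) = (\<lambda>i. reflection cor \<alpha> x i - c * reflection cor \<alpha> y i)"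
  unfolding reflection_def by (rule ext) (simp add: pair_lin1, simp add: algebra_simps)

lemma rs_finite: "root_system R cor \<Longrightarrow> finite R" by (simp add: root_system_def)
lemma rs_0: "root_system R cor \<Longrightarrow> (\<lambda>i. 0) \<notin> R" by (simp add: root_system_def)
lemma rs_span: "root_system R cor \<Longrightarrow> \<exists>c. \<xi> = (\<lambda>i. \<Sum>\<alpha>\<in>R. c \<alpha> * \<alpha> i)" by (simp add: root_system_def)
lemma rs_two: "root_system R cor \<Longrightarrow> \<alpha> \<in> R \<Longrightarrow> pair \<alpha> (cor \<alpha>) = 2" by (simp add: root_system_def)
lemma rs_refl: "root_system R cor \<Longrightarrow> \<alpha> \<in> R \<Longrightarrow> \<beta> \<in> R \<Longrightarrow> reflection cor \<alpha> \<beta> \<in> R" by (simp add: root_system_def)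
lemma rs_int: "root_system R cor \<Longrightarrow> \<alpha> \<in> R \<Longrightarrow> \<beta> \<in> R \<Longrightarrow> pair \<beta> (cor \<alpha>) \<in> \<int>" by (simp add: root_system_def)

lemma rs_unique:
  fixes R :: "('n::finite \<Rightarrow> 'a::field_char_0) set"
  assumes rs: "root_system R cor" and gR: "\<gamma> \<in> R" and c2: "pair \<gamma> c = 2"
    and cR: "\<forall>\<beta>\<in>R. (\<lambda>i. \<beta> i - pair \<beta> c * \<gamma> i) \<in> R"
  shows "pair \<xi> c = pair \<xi> (cor \<gamma>)"
proof -
  define \<phi> where "\<phi> x = pair x c - pair x (cor \<gamma>)" for x
  have g2: "pair \<gamma> (cor \<gamma>) = 2" by (rule rs_two[OF rs gR])
  have \<phi>\<gamma>: "\<phi> \<gamma> = 0" by (simp add: \<phi>_def c2 g2)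
  have step: "(\<lambda>i. x i + \<phi> x * \<gamma> i) \<in> R" if "x \<in> R" for x
  proof -
    have "reflection cor \<gamma> (\<lambda>i. x i - pair x c * \<gamma> i) \<in> R"
      using rs_refl[OF rs gR] cR that by blast
    moreover have "reflection cor \<gamma> (\<lambda>i. x i - pair x c * \<gamma> i) = (\<lambda>i. x i + \<phi> x * \<gamma> i)"
      unfolding reflection_def \<phi>_def by (rule ext) (simp add: pair_lin1 g2, simp add: algebra_simps)
    ultimately show ?thesis by simp
  qed
  have shift: "\<phi> (\<lambda>i. x i + a * \<gamma> i) = \<phi> x" for x a
    using \<phi>\<gamma> by (simp add: \<phi>_def pair_lin1p algebra_simps)
  have zero: "\<phi> \<beta> = 0" if bR: "\<beta> \<in> R" for \<beta>
  proof (rule ccontr)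
    assume nz: "\<phi> \<beta> \<noteq> 0"
    define xs where "xs m = (\<lambda>i. \<beta> i + of_nat m * \<phi> \<beta> * \<gamma> i)" for m :: nat
    have xsR: "xs m \<in> R" for m
    proof (induction m)
      case 0 then show ?case using bR by (simp add: xs_def)
    next
      case (Suc m)
      have "(\<lambda>i. xs m i + \<phi> (xs m) * \<gamma> i) \<in> R" by (rule step[OF Suc])
      moreover have "\<phi> (xs m) = \<phi> \<beta>" unfolding xs_def using shift[of \<beta> "of_nat m * \<phi> \<beta>"]
        by (simp add: mult.assoc)
      ultimately show ?case by (simp add: xs_def algebra_simps)
    qed
    have "\<gamma> \<noteq> (\<lambda>i. 0)" using rs_0[OF rs] gR by blast
    then obtain i0 where i0: "\<gamma> i0 \<noteq> 0" by (metis ext)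
    have "inj xs"
    proof (rule injI)
      fix m m' assume "xs m = xs m'"
      then have "xs m i0 = xs m' i0" by simp
      then have "of_nat m * (\<phi> \<beta> * \<gamma> i0) = of_nat m' * (\<phi> \<beta> * \<gamma> i0)"
        by (simp add: xs_def mult.assoc)
      then have "(of_nat m :: 'a) = of_nat m'" using nz i0 by simp
      then show "m = m'" by simp
    qed
    moreover have "range xs \<subseteq> R" using xsR by blast
    then have "finite (range xs)" using rs_finite[OF rs] finite_subset by blast
    ultimately show False using finite_imageD by (metis infinite_UNIV_nat)
  qed
  obtain cc where xi: "\<xi> = (\<lambda>i. \<Sum>\<alpha>\<in>R. cc \<alpha> * \<alpha> i)" using rs_span[OF rs] by blast
  have "\<phi> \<xi> = (\<Sum>\<alpha>\<in>R. cc \<alpha> * \<phi> \<alpha>)"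
    unfolding xi \<phi>_def pair_sum1 by (simp add: algebra_simps sum_subtractf)
  also have "\<dots> = 0" using zero by simp
  finally show ?thesis by (simp add: \<phi>_def)
qed

lemma refl_equiv:
  fixes R :: "('n::finite \<Rightarrow> 'a::field_char_0) set"
  assumes rs: "root_system R cor" and bR: "\<beta> \<in> R" and gR: "\<gamma> \<in> R"
  shows "pair (reflection cor \<beta> \<eta>) (cor (reflection cor \<beta> \<gamma>)) = pair \<eta> (cor \<gamma>)"
proof -
  let ?s = "reflection cor \<beta>"
  define c where "c = (\<lambda>i. cor \<gamma> i - pair \<beta> (cor \<gamma>) * cor \<beta> i)"
  have i: "pair (?s \<xi>) (cor \<gamma>) = pair \<xi> c" for \<xi>
    unfolding c_def pair_lin2 pair_refl by (simp add: mult.commute)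
  have ii: "?s (?s x) = x" for x by (rule refl_invol[where \<alpha>=\<beta> and cor=cor, OF rs_two[OF rs bR]])
  have sgR: "?s \<gamma> \<in> R" by (rule rs_refl[OF rs bR gR])
  have iii: "pair (?s \<gamma>) c = 2" using i[of "?s \<gamma>"] ii rs_two[OF rs gR] by simp
  have iv: "\<forall>\<delta>\<in>R. (\<lambda>i. \<delta> i - pair \<delta> c * ?s \<gamma> i) \<in> R"
  proof
    fix \<delta> assume dR: "\<delta> \<in> R"
    have "reflection cor \<gamma> (?s \<delta>) = (\<lambda>i. ?s \<delta> i - pair \<delta> c * \<gamma> i)"
      by (rule ext) (simp add: refl_app i)
    then have "?s (reflection cor \<gamma> (?s \<delta>)) = (\<lambda>i. \<delta> i - pair \<delta> c * ?s \<gamma> i)"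
      by (simp add: refl_lin ii)
    moreover have "?s (reflection cor \<gamma> (?s \<delta>)) \<in> R"
      using rs_refl[OF rs] bR gR dR by blast
    ultimately show "(\<lambda>i. \<delta> i - pair \<delta> c * ?s \<gamma> i) \<in> R" by simp
  qed
  have v: "pair \<xi> c = pair \<xi> (cor (?s \<gamma>))" for \<xi> by (rule rs_unique[OF rs sgR iii iv])
  have "pair (?s \<eta>) (cor (?s \<gamma>)) = pair (?s \<eta>) c" by (simp add: v)
  also have "\<dots> = pair (?s (?s \<eta>)) (cor \<gamma>)" by (simp add: i)
  also have "\<dots> = pair \<eta> (cor \<gamma>)" by (simp add: ii)
  finally show ?thesis .
qed

lemma neg_root:
  assumes rs: "root_system R cor" and gR: "\<gamma> \<in> R"
  shows "(\<lambda>i. - \<gamma> i) \<in> R"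
proof -
  have "reflection cor \<gamma> \<gamma> = (\<lambda>i. - \<gamma> i)"
    by (rule ext) (simp add: refl_app rs_two[OF rs gR])
  then show ?thesis using rs_refl[OF rs gR gR] by simp
qed

lemma cor_neg:
  fixes R :: "('n::finite \<Rightarrow> 'a::field_char_0) set"
  assumes rs: "root_system R cor" and gR: "\<gamma> \<in> R"
  shows "pair \<xi> (cor (\<lambda>i. - \<gamma> i)) = - pair \<xi> (cor \<gamma>)"
proof -
  define c where "c = (\<lambda>i. - cor \<gamma> i)"
  have "pair (\<lambda>i. - \<gamma> i) c = 2" by (simp add: c_def pair_neg1 pair_neg2 rs_two[OF rs gR])
  moreover have "\<forall>\<delta>\<in>R. (\<lambda>i. \<delta> i - pair \<delta> c * (- \<gamma> i)) \<in> R"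
  proof
    fix \<delta> assume "\<delta> \<in> R"
    moreover have "(\<lambda>i. \<delta> i - pair \<delta> c * (- \<gamma> i)) = reflection cor \<gamma> \<delta>"
      by (rule ext) (simp add: c_def refl_app pair_neg2)
    ultimately show "(\<lambda>i. \<delta> i - pair \<delta> c * (- \<gamma> i)) \<in> R" using rs_refl[OF rs gR] by simp
  qed
  ultimately have "pair \<xi> c = pair \<xi> (cor (\<lambda>i. - \<gamma> i))"
    by (intro rs_unique[OF rs neg_root[OF rs gR]]) auto
  then show ?thesis by (simp add: c_def pair_neg2)
qed

lemma weyl_props:
  fixes R :: "('n::finite \<Rightarrow> 'a::field_char_0) set"
  assumes rs: "root_system R cor"
  shows "w \<in> weyl_group R cor \<Longrightarrow>
    (\<forall>x y. w (\<lambda>i. x i + y i) = (\<lambda>i. w x i + w y i)) \<and> (\<forall>c x. w (\<lambda>i. c * x i) = (\<lambda>i. c * w x i)) \<and>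
    bij w \<and> (\<forall>\<alpha>\<in>R. w \<alpha> \<in> R) \<and> (\<forall>\<alpha>\<in>R. \<forall>\<xi>. pair (w \<xi>) (cor (w \<alpha>)) = pair \<xi> (cor \<alpha>))"
proof (induction w rule: weyl_group.induct)
  case weyl_id
  then show ?case by (simp add: bij_id[unfolded id_def])
next
  case (weyl_step \<alpha> w)
  have bs: "bij (reflection cor \<alpha>)"
    by (rule involuntory_imp_bij) (rule refl_invol[where \<alpha>=\<alpha> and cor=cor, OF rs_two[OF rs weyl_step.hyps(1)]])
  have "bij (reflection cor \<alpha> \<circ> w)" using bij_comp[OF _ bs] weyl_step.IH by blast
  then have "bij (\<lambda>a. reflection cor \<alpha> (w a))" by (simp add: comp_def)
  then show ?case using weyl_step
    by (auto simp: refl_add refl_scale rs_refl[OF rs] refl_equiv[OF rs])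
qed

lemma bij_betw_invol: "(\<forall>x\<in>X. f x \<in> X) \<Longrightarrow> (\<forall>x\<in>X. f (f x) = x) \<Longrightarrow> bij_betw f X X"
  by (rule bij_betw_byWitness[of X f f X]) auto

lemma refl_neg: "reflection cor \<alpha> (\<lambda>i. - x i) = (\<lambda>i. - reflection cor \<alpha> x i)"
  by (rule ext) (simp add: refl_app pair_neg1)

lemma pos_sys:
  fixes R Rpos :: "('n::finite \<Rightarrow> 'a::field_char_0) set"
  assumes rs: "root_system R cor" and ps: "positive_system R Rpos"
  shows "Rpos \<subseteq> R"
    and "\<And>\<gamma>. \<gamma> \<in> R \<Longrightarrow> \<gamma> \<notin> Rpos \<Longrightarrow> (\<lambda>i. - \<gamma> i) \<in> Rpos"
    and "\<And>\<gamma>. \<gamma> \<in> Rpos \<Longrightarrow> (\<lambda>i. - \<gamma> i) \<notin> Rpos"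
    and "\<And>\<alpha>. \<alpha> \<in> Rpos \<Longrightarrow> \<exists>N::int. N > 0 \<and> pair (rho Rpos) (cor \<alpha>) = of_int N / 2"
proof -
  show PR: "Rpos \<subseteq> R" using ps by (simp add: positive_system_def)
  obtain \<Delta> where DR: "\<Delta> \<subseteq> R"
    and indep: "\<And>c. (\<lambda>i. \<Sum>\<delta>\<in>\<Delta>. c \<delta> * \<delta> i) = (\<lambda>i. 0) \<Longrightarrow> \<forall>\<delta>\<in>\<Delta>. c \<delta> = 0"
    and repr: "\<And>\<beta>. \<beta> \<in> R \<Longrightarrow> \<exists>k::('n \<Rightarrow> 'a) \<Rightarrow> int. \<beta> = (\<lambda>i. \<Sum>\<delta>\<in>\<Delta>. of_int (k \<delta>) * \<delta> i) \<and>
        (((\<forall>\<delta>\<in>\<Delta>. k \<delta> \<ge> 0) \<and> \<beta> \<in> Rpos) \<or> ((\<forall>\<delta>\<in>\<Delta>. k \<delta> \<le> 0) \<and> \<beta> \<notin> Rpos))"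
    using ps unfolding positive_system_def by blast
  have finD: "finite \<Delta>" using DR rs_finite[OF rs] finite_subset by blast
  define kk where "kk \<beta> = (SOME k::('n \<Rightarrow> 'a) \<Rightarrow> int. \<beta> = (\<lambda>i. \<Sum>\<delta>\<in>\<Delta>. of_int (k \<delta>) * \<delta> i) \<and>
        (((\<forall>\<delta>\<in>\<Delta>. k \<delta> \<ge> 0) \<and> \<beta> \<in> Rpos) \<or> ((\<forall>\<delta>\<in>\<Delta>. k \<delta> \<le> 0) \<and> \<beta> \<notin> Rpos)))" for \<beta>
  have kk: "\<beta> = (\<lambda>i. \<Sum>\<delta>\<in>\<Delta>. of_int (kk \<beta> \<delta>) * \<delta> i) \<and>
        (((\<forall>\<delta>\<in>\<Delta>. kk \<beta> \<delta> \<ge> 0) \<and> \<beta> \<in> Rpos) \<or> ((\<forall>\<delta>\<in>\<Delta>. kk \<beta> \<delta> \<le> 0) \<and> \<beta> \<notin> Rpos))"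
    if "\<beta> \<in> R" for \<beta>
    unfolding kk_def by (rule someI_ex[OF repr[OF that]])
  have kkrep: "\<beta> = (\<lambda>i. \<Sum>\<delta>\<in>\<Delta>. of_int (kk \<beta> \<delta>) * \<delta> i)" if "\<beta> \<in> R" for \<beta>
    using kk[OF that] by blast
  have kkpos: "\<forall>\<delta>\<in>\<Delta>. kk \<beta> \<delta> \<ge> 0" if "\<beta> \<in> Rpos" for \<beta>
    using kk[of \<beta>] that PR by blast
  have kkneg: "\<forall>\<delta>\<in>\<Delta>. kk \<beta> \<delta> \<le> 0" if "\<beta> \<in> R" "\<beta> \<notin> Rpos" for \<beta>
    using kk[of \<beta>] that by blast
  have uniq: "k1 \<delta> = k2 \<delta>"
    if "(\<lambda>i. \<Sum>\<delta>\<in>\<Delta>. of_int (k1 \<delta>) * \<delta> i) = (\<lambda>i. \<Sum>\<delta>\<in>\<Delta>. (of_int (k2 \<delta>) :: 'a) * \<delta> i)" "\<delta> \<in> \<Delta>"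
    for k1 k2 \<delta>
  proof -
    have "(\<lambda>i. \<Sum>\<delta>\<in>\<Delta>. (of_int (k1 \<delta>) - of_int (k2 \<delta>)) * \<delta> i) = (\<lambda>i. (0::'a))"
    proof
      fix i
      have "(\<Sum>\<delta>\<in>\<Delta>. of_int (k1 \<delta>) * \<delta> i) = (\<Sum>\<delta>\<in>\<Delta>. (of_int (k2 \<delta>) :: 'a) * \<delta> i)"
        using fun_cong[OF that(1), of i] by simp
      then show "(\<Sum>\<delta>\<in>\<Delta>. (of_int (k1 \<delta>) - of_int (k2 \<delta>)) * \<delta> i) = 0"
        by (simp add: left_diff_distrib sum_subtractf)
    qed
    then have "(of_int (k1 \<delta>) :: 'a) - of_int (k2 \<delta>) = 0"
      using indep[of "\<lambda>\<delta>. of_int (k1 \<delta>) - of_int (k2 \<delta>)"] that(2) by blast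
    then show ?thesis by simp
  qed
  have zero: "\<exists>\<delta>\<in>\<Delta>. kk \<gamma> \<delta> \<noteq> 0" if "\<gamma> \<in> R" for \<gamma>
  proof (rule ccontr)
    assume "\<not> (\<exists>\<delta>\<in>\<Delta>. kk \<gamma> \<delta> \<noteq> 0)"
    then have "\<gamma> = (\<lambda>i. 0)" using kkrep[OF that] by simp
    then show False using rs_0[OF rs] that by simp
  qed
  have kklin: "kk x \<delta> = kk \<gamma> \<delta> - a * kk \<alpha> \<delta>"
    if "x \<in> R" "\<gamma> \<in> R" "\<alpha> \<in> R" "x = (\<lambda>i. \<gamma> i - of_int a * \<alpha> i)" "\<delta> \<in> \<Delta>" for x \<gamma> \<alpha> a \<delta>
  proof -
    have "(\<lambda>i. \<Sum>\<delta>\<in>\<Delta>. of_int (kk \<gamma> \<delta> - a * kk \<alpha> \<delta>) * \<delta> i) = (\<lambda>i. \<gamma> i - of_int a * \<alpha> i)"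
    proof
      fix i
      have "\<gamma> i = (\<Sum>\<delta>\<in>\<Delta>. of_int (kk \<gamma> \<delta>) * \<delta> i)" "\<alpha> i = (\<Sum>\<delta>\<in>\<Delta>. of_int (kk \<alpha> \<delta>) * \<delta> i)"
        using fun_cong[OF kkrep[OF that(2)], of i] fun_cong[OF kkrep[OF that(3)], of i] by auto
      then show "(\<Sum>\<delta>\<in>\<Delta>. of_int (kk \<gamma> \<delta> - a * kk \<alpha> \<delta>) * \<delta> i) = \<gamma> i - of_int a * \<alpha> i"
        by (simp add: algebra_simps sum_subtractf sum_distrib_left)
    qed
    then have "(\<lambda>i. \<Sum>\<delta>\<in>\<Delta>. of_int (kk x \<delta>) * \<delta> i) = (\<lambda>i. \<Sum>\<delta>\<in>\<Delta>. of_int (kk \<gamma> \<delta> - a * kk \<alpha> \<delta>) * \<delta> i)"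
      using kkrep[OF that(1)] that(4) by simp
    from uniq[of "kk x" "\<lambda>\<delta>. kk \<gamma> \<delta> - a * kk \<alpha> \<delta>", OF this that(5)] show ?thesis by simp
  qed
  define ht where "ht \<beta> = (\<Sum>\<delta>\<in>\<Delta>. kk \<beta> \<delta>)" for \<beta>
  have htlin: "ht x = ht \<gamma> - a * ht \<alpha>"
    if "x \<in> R" "\<gamma> \<in> R" "\<alpha> \<in> R" "x = (\<lambda>i. \<gamma> i - of_int a * \<alpha> i)" for x \<gamma> \<alpha> a
    using kklin[OF that] by (simp add: ht_def sum_subtractf sum_distrib_left)
  have negeq: "(\<lambda>i. - \<gamma> i) = (\<lambda>i. \<gamma> i - of_int 2 * \<gamma> i)" for \<gamma> :: "'n \<Rightarrow> 'a"
    by (rule ext) simp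
  have kkneg2: "kk (\<lambda>i. - \<gamma> i) \<delta> = - kk \<gamma> \<delta>" if "\<gamma> \<in> R" "\<delta> \<in> \<Delta>" for \<gamma> \<delta>
    using kklin[OF neg_root[OF rs that(1)] that(1) that(1) negeq that(2)] by simp
  have htneg: "ht (\<lambda>i. - \<gamma> i) = - ht \<gamma>" if "\<gamma> \<in> R" for \<gamma>
    using htlin[OF neg_root[OF rs that] that that negeq] by simp
  show A: "(\<lambda>i. - \<gamma> i) \<in> Rpos" if "\<gamma> \<in> R" "\<gamma> \<notin> Rpos" for \<gamma>
  proof (rule ccontr)
    assume "(\<lambda>i. - \<gamma> i) \<notin> Rpos"
    then have "\<forall>\<delta>\<in>\<Delta>. kk (\<lambda>i. - \<gamma> i) \<delta> \<le> 0" using kkneg neg_root[OF rs that(1)] by blast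
    then have "\<forall>\<delta>\<in>\<Delta>. kk \<gamma> \<delta> = 0" using kkneg[OF that] kkneg2[OF that(1)] by fastforce
    then show False using zero[OF that(1)] by blast
  qed
  show B: "(\<lambda>i. - \<gamma> i) \<notin> Rpos" if "\<gamma> \<in> Rpos" for \<gamma>
  proof
    assume "(\<lambda>i. - \<gamma> i) \<in> Rpos"
    then have "\<forall>\<delta>\<in>\<Delta>. kk (\<lambda>i. - \<gamma> i) \<delta> \<ge> 0" using kkpos by blast
    moreover have gR: "\<gamma> \<in> R" using that PR by blast
    ultimately have "\<forall>\<delta>\<in>\<Delta>. kk \<gamma> \<delta> = 0" using kkpos[OF that] kkneg2[OF gR] by fastforce
    then show False using zero[OF gR] by blast
  qed
  have htpos: "ht \<gamma> > 0" if "\<gamma> \<in> Rpos" for \<gamma>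
  proof -
    have gR: "\<gamma> \<in> R" using that PR by blast
    have nn: "\<forall>\<delta>\<in>\<Delta>. kk \<gamma> \<delta> \<ge> 0" by (rule kkpos[OF that])
    then have "ht \<gamma> \<ge> 0" by (simp add: ht_def sum_nonneg)
    moreover have "ht \<gamma> \<noteq> 0"
    proof
      assume "ht \<gamma> = 0"
      then have "\<forall>\<delta>\<in>\<Delta>. kk \<gamma> \<delta> = 0" using sum_nonneg_eq_0_iff[OF finD, of "kk \<gamma>"] nn by (simp add: ht_def)
      then show False using zero[OF gR] by blast
    qed
    ultimately show ?thesis by simp
  qed
  show "\<exists>N::int. N > 0 \<and> pair (rho Rpos) (cor \<alpha>) = of_int N / 2" if aP: "\<alpha> \<in> Rpos" for \<alpha>
  proof -
    have aR: "\<alpha> \<in> R" using aP PR by blast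
    let ?s = "reflection cor \<alpha>"
    have finP: "finite Rpos" using PR rs_finite[OF rs] finite_subset by blast
    define a where "a \<gamma> = (SOME z::int. pair \<gamma> (cor \<alpha>) = of_int z)" for \<gamma>
    have aeq: "pair \<gamma> (cor \<alpha>) = of_int (a \<gamma>)" if "\<gamma> \<in> R" for \<gamma>
    proof -
      have "pair \<gamma> (cor \<alpha>) \<in> \<int>" by (rule rs_int[OF rs aR that])
      then have "\<exists>z::int. pair \<gamma> (cor \<alpha>) = of_int z" by (auto elim: Ints_cases)
      then show ?thesis unfolding a_def by (rule someI_ex)
    qed
    have sR: "?s \<gamma> \<in> R" if "\<gamma> \<in> R" for \<gamma> by (rule rs_refl[OF rs aR that])
    have seq: "?s \<gamma> = (\<lambda>i. \<gamma> i - of_int (a \<gamma>) * \<alpha> i)" if "\<gamma> \<in> R" for \<gamma>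
      by (rule ext) (simp add: refl_app aeq[OF that])
    have htS: "ht (?s \<gamma>) = ht \<gamma> - a \<gamma> * ht \<alpha>" if "\<gamma> \<in> R" for \<gamma>
      by (rule htlin[OF sR[OF that] that aR seq[OF that]])
    have ss: "?s (?s x) = x" for x by (rule refl_invol[where \<alpha>=\<alpha> and cor=cor, OF rs_two[OF rs aR]])
    define A where "A = {\<gamma>\<in>Rpos. ?s \<gamma> \<notin> Rpos}"
    have AP: "A \<subseteq> Rpos" by (auto simp: A_def)
    have b1: "bij_betw ?s (Rpos - A) (Rpos - A)"
      by (rule bij_betw_invol) (auto simp: A_def ss)
    define \<tau> where "\<tau> \<gamma> = (\<lambda>i. - ?s \<gamma> i)" for \<gamma>
    have tauA: "\<tau> \<gamma> \<in> A" if "\<gamma> \<in> A" for \<gamma>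
    proof -
      have gP: "\<gamma> \<in> Rpos" and sg: "?s \<gamma> \<notin> Rpos" using that by (auto simp: A_def)
      have gR: "\<gamma> \<in> R" using gP PR by blast
      have "\<tau> \<gamma> \<in> Rpos" unfolding \<tau>_def by (rule A[OF sR[OF gR] sg])
      moreover have "?s (\<tau> \<gamma>) = (\<lambda>i. - \<gamma> i)" by (simp add: \<tau>_def refl_neg ss)
      moreover have "(\<lambda>i. - \<gamma> i) \<notin> Rpos" by (rule B[OF gP])
      ultimately show ?thesis by (simp add: A_def)
    qed
    have tt: "\<tau> (\<tau> \<gamma>) = \<gamma>" for \<gamma> by (simp add: \<tau>_def refl_neg ss)
    have b2: "bij_betw \<tau> A A" by (rule bij_betw_invol) (auto simp: tauA tt)
    have s1: "(\<Sum>\<gamma>\<in>Rpos - A. ht (?s \<gamma>)) = (\<Sum>\<gamma>\<in>Rpos - A. ht \<gamma>)"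
      using sum.reindex_bij_betw[OF b1, of ht] .
    have s2: "(\<Sum>\<gamma>\<in>A. ht (?s \<gamma>)) = - (\<Sum>\<gamma>\<in>A. ht \<gamma>)"
    proof -
      have "(\<Sum>\<gamma>\<in>A. ht (?s \<gamma>)) = (\<Sum>\<gamma>\<in>A. - ht (\<tau> \<gamma>))"
      proof (rule sum.cong[OF refl])
        fix \<gamma> assume "\<gamma> \<in> A"
        then have "\<gamma> \<in> R" using AP PR by blast
        then show "ht (?s \<gamma>) = - ht (\<tau> \<gamma>)" unfolding \<tau>_def using htneg[OF sR] by simp
      qed
      also have "\<dots> = - (\<Sum>\<gamma>\<in>A. ht (\<tau> \<gamma>))" by (simp add: sum_negf)
      also have "(\<Sum>\<gamma>\<in>A. ht (\<tau> \<gamma>)) = (\<Sum>\<gamma>\<in>A. ht \<gamma>)" using sum.reindex_bij_betw[OF b2, of ht] .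
      finally show ?thesis .
    qed
    have s3: "(\<Sum>\<gamma>\<in>Rpos. ht (?s \<gamma>)) = (\<Sum>\<gamma>\<in>Rpos. ht \<gamma>) - (\<Sum>\<gamma>\<in>Rpos. a \<gamma>) * ht \<alpha>"
    proof -
      have "(\<Sum>\<gamma>\<in>Rpos. ht (?s \<gamma>)) = (\<Sum>\<gamma>\<in>Rpos. ht \<gamma> - a \<gamma> * ht \<alpha>)"
        using htS PR by (intro sum.cong) auto
      then show ?thesis by (simp add: sum_subtractf sum_distrib_right)
    qed
    have split1: "(\<Sum>\<gamma>\<in>Rpos. ht (?s \<gamma>)) = (\<Sum>\<gamma>\<in>Rpos - A. ht (?s \<gamma>)) + (\<Sum>\<gamma>\<in>A. ht (?s \<gamma>))"
      by (rule sum.subset_diff[OF AP finP])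
    have split2: "(\<Sum>\<gamma>\<in>Rpos. ht \<gamma>) = (\<Sum>\<gamma>\<in>Rpos - A. ht \<gamma>) + (\<Sum>\<gamma>\<in>A. ht \<gamma>)"
      by (rule sum.subset_diff[OF AP finP])
    have key: "(\<Sum>\<gamma>\<in>Rpos. a \<gamma>) * ht \<alpha> = 2 * (\<Sum>\<gamma>\<in>A. ht \<gamma>)"
      using s1 s2 s3 split1 split2 by linarith
    have "?s \<alpha> = (\<lambda>i. - \<alpha> i)" by (rule ext) (simp add: refl_app rs_two[OF rs aR])
    then have aA: "\<alpha> \<in> A" using B[OF aP] aP by (simp add: A_def)
    have finA: "finite A" using AP finP finite_subset by blast
    have "ht \<alpha> \<le> (\<Sum>\<gamma>\<in>A. ht \<gamma>)"
      by (rule member_le_sum[OF aA _ finA]) (use AP htpos in \<open>auto intro: less_imp_le\<close>)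
    then have "(\<Sum>\<gamma>\<in>Rpos. a \<gamma>) * ht \<alpha> > 0" using key htpos[OF aP] by linarith
    then have Npos: "(\<Sum>\<gamma>\<in>Rpos. a \<gamma>) > 0" using htpos[OF aP] by (simp add: zero_less_mult_iff)
    have rho_eq: "rho Rpos = (\<lambda>i. \<Sum>\<gamma>\<in>Rpos. (1/2) * \<gamma> i)"
      by (simp add: rho_def sum_divide_distrib)
    have "pair (rho Rpos) (cor \<alpha>) = (\<Sum>\<gamma>\<in>Rpos. (1/2) * pair \<gamma> (cor \<alpha>))"
      unfolding rho_eq by (rule pair_sum1)
    also have "\<dots> = (\<Sum>\<gamma>\<in>Rpos. (1/2) * of_int (a \<gamma>))"
      using aeq PR by (intro sum.cong) auto
    also have "\<dots> = of_int (\<Sum>\<gamma>\<in>Rpos. a \<gamma>) / 2"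
      by (simp add: sum_distrib_left[symmetric] sum_divide_distrib[symmetric])
    finally show ?thesis using Npos by blast
  qed
qed

lemma pair_diff1: "pair (\<lambda>i. x i - y i) H = pair x H - pair y H"
  by (simp add: pair_def algebra_simps sum_subtractf)

lemma simple_transfer:
  assumes inj: "inj w" and wP: "w ` P = P" and add: "\<And>x y. w (\<lambda>i. x i + y i) = (\<lambda>i. w x i + w y i)"
  shows "w ` simple_roots P = simple_roots P"
proof (rule Set.set_eqI, rule iffI)
  fix y assume "y \<in> w ` simple_roots P"
  then obtain a where a: "a \<in> P" "\<not> (\<exists>\<beta>\<in>P. \<exists>\<gamma>\<in>P. a = (\<lambda>i. \<beta> i + \<gamma> i))" "y = w a"
    unfolding simple_roots_def by blast
  have yP: "y \<in> P" using a(1,3) wP by blast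
  have "\<not> (\<exists>\<beta>\<in>P. \<exists>\<gamma>\<in>P. y = (\<lambda>i. \<beta> i + \<gamma> i))"
  proof
    assume "\<exists>\<beta>\<in>P. \<exists>\<gamma>\<in>P. y = (\<lambda>i. \<beta> i + \<gamma> i)"
    then obtain \<beta> \<gamma> where bg: "\<beta> \<in> P" "\<gamma> \<in> P" "y = (\<lambda>i. \<beta> i + \<gamma> i)" by blast
    obtain \<beta>' where b': "\<beta>' \<in> P" "\<beta> = w \<beta>'" using bg(1) wP by blast
    obtain \<gamma>' where g': "\<gamma>' \<in> P" "\<gamma> = w \<gamma>'" using bg(2) wP by blast
    have "w a = w (\<lambda>i. \<beta>' i + \<gamma>' i)" unfolding add using bg(3) a(3) b' g' by simp
    then have "a = (\<lambda>i. \<beta>' i + \<gamma>' i)" using inj by (simp add: inj_eq)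
    then show False using a(2) b'(1) g'(1) by blast
  qed
  then show "y \<in> simple_roots P" using yP unfolding simple_roots_def by blast
next
  fix y assume y: "y \<in> simple_roots P"
  then have yP: "y \<in> P" and ny: "\<not> (\<exists>\<beta>\<in>P. \<exists>\<gamma>\<in>P. y = (\<lambda>i. \<beta> i + \<gamma> i))"
    unfolding simple_roots_def by blast+
  obtain a where aP: "a \<in> P" and ya: "y = w a" using yP wP by blast
  have "\<not> (\<exists>\<beta>\<in>P. \<exists>\<gamma>\<in>P. a = (\<lambda>i. \<beta> i + \<gamma> i))"
  proof
    assume "\<exists>\<beta>\<in>P. \<exists>\<gamma>\<in>P. a = (\<lambda>i. \<beta> i + \<gamma> i)"
    then obtain \<beta> \<gamma> where bg: "\<beta> \<in> P" "\<gamma> \<in> P" "a = (\<lambda>i. \<beta> i + \<gamma> i)" by blast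
    have "y = (\<lambda>i. w \<beta> i + w \<gamma> i)" using ya bg(3) add by simp
    moreover have "w \<beta> \<in> P" "w \<gamma> \<in> P" using bg wP by blast+
    ultimately show False using ny by blast
  qed
  then have "a \<in> simple_roots P" using aP unfolding simple_roots_def by blast
  then show "y \<in> w ` simple_roots P" using ya by blast
qed

theorem mainTheorem16:
  fixes R Rpos :: "('n::finite \<Rightarrow> 'a::field_char_0) set"
    and cor :: "('n \<Rightarrow> 'a) \<Rightarrow> ('n \<Rightarrow> 'a)"
    and \<Omega> :: "(('n \<Rightarrow> 'a) \<Rightarrow> 'a) set"
    and w :: "('n \<Rightarrow> 'a) \<Rightarrow> ('n \<Rightarrow> 'a)"
  assumes "alg_closed TYPE('a)"
    and "root_system R cor"
    and "positive_system R Rpos"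
    and "primeideal \<Omega> S_ring"
    and "strongly_dominant Rpos cor \<Omega>"
    and "w \<in> weyl_group R cor"
    and "act_ideal Rpos w \<Omega> = \<Omega>"
  shows "w ` B_lambda R Rpos cor \<Omega> = B_lambda R Rpos cor \<Omega>"
proof -
  note ac = assms(1) and rs = assms(2) and ps = assms(3) and pr = assms(4) and sd = assms(5)
    and wW = assms(6) and act = assms(7)
  have wadd: "\<forall>x y. w (\<lambda>i. x i + y i) = (\<lambda>i. w x i + w y i)"
    and bw: "bij w" and wR: "\<forall>\<alpha>\<in>R. w \<alpha> \<in> R"
    and weq: "\<forall>\<alpha>\<in>R. \<forall>\<xi>. pair (w \<xi>) (cor (w \<alpha>)) = pair \<xi> (cor \<alpha>)"
    using weyl_props[OF rs wW] by blast+
  have PR: "Rpos \<subseteq> R" by (rule pos_sys(1)[OF rs ps])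
  define \<rho> where "\<rho> = rho Rpos"
  obtain x0 where x0: "x0 \<in> zero_set \<Omega>" using prime_has_zero[OF ac pr] by blast
  have "\<exists>\<xi>0. \<xi>0 \<in> zero_set \<Omega> \<inter> dominant_integral Rpos cor"
  proof (rule ccontr)
    assume "\<not> ?thesis"
    then have e: "zero_set \<Omega> \<inter> dominant_integral Rpos cor = {}" by blast
    have "(\<lambda>\<xi>. 1) \<in> (polyfun :: (('n \<Rightarrow> 'a) \<Rightarrow> 'a) set)" by (rule pf_const)
    then have "\<forall>\<xi>\<in>zero_set \<Omega>. (1::'a) = 0"
      using sd e unfolding strongly_dominant_def zariski_dense_in_def by blast
    then show False using x0 by simp
  qed
  then obtain \<xi>0 where z0: "\<forall>f\<in>\<Omega>. f \<xi>0 = 0" and d0: "\<forall>\<alpha>\<in>Rpos. pair \<xi>0 (cor \<alpha>) \<in> \<nat>"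
    by (auto simp: zero_set_def dominant_integral_def)
  define L where "L = integral_roots R cor \<Omega> \<inter> Rpos"
  have winv: "w (inv_into UNIV w \<eta>) = \<eta>" for \<eta> using bw by (simp add: bij_def surj_f_inv_f)
  have wL: "w \<alpha> \<in> L" if aL: "\<alpha> \<in> L" for \<alpha>
  proof -
    have aR: "\<alpha> \<in> R" and aP: "\<alpha> \<in> Rpos" using aL by (auto simp: L_def integral_roots_def)
    obtain n :: int where fO: "(\<lambda>\<xi>. pair \<xi> (cor \<alpha>) - of_int n) \<in> \<Omega>"
      using aL by (auto simp: L_def integral_roots_def)
    define f where "f = (\<lambda>\<xi>. pair \<xi> (cor \<alpha>) - of_int n)"
    have "(\<lambda>\<xi>. f (dot Rpos (inv_into UNIV w) \<xi>)) \<in> act_ideal Rpos w \<Omega>"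
      unfolding act_ideal_def f_def by (rule image_eqI[OF _ fO]) simp
    then have gO: "(\<lambda>\<xi>. f (dot Rpos (inv_into UNIV w) \<xi>)) \<in> \<Omega>" using act by simp
    have waR: "w \<alpha> \<in> R" using wR aR by blast
    have geq: "f (dot Rpos (inv_into UNIV w) \<xi>) =
       pair \<xi> (cor (w \<alpha>)) + pair \<rho> (cor (w \<alpha>)) - pair \<rho> (cor \<alpha>) - of_int n" for \<xi>
    proof -
      have "pair (inv_into UNIV w (\<lambda>j. \<xi> j + \<rho> j)) (cor \<alpha>) = pair (\<lambda>j. \<xi> j + \<rho> j) (cor (w \<alpha>))"
        using weq aR winv by metis
      then show ?thesis
        by (simp add: f_def dot_def pair_diff1 pair_add1 \<rho>_def)
    qed
    have n0: "pair \<xi>0 (cor \<alpha>) = of_int n" using z0 fO by fastforce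
    have g0: "pair \<xi>0 (cor (w \<alpha>)) + pair \<rho> (cor (w \<alpha>)) - pair \<rho> (cor \<alpha>) - of_int n = 0"
      using z0 gO geq by fastforce
    show ?thesis
    proof (cases "w \<alpha> \<in> Rpos")
      case True
      obtain m :: nat where m: "pair \<xi>0 (cor (w \<alpha>)) = of_nat m" using d0 True by (auto elim: Nats_cases)
      have "(\<lambda>\<xi>. f (dot Rpos (inv_into UNIV w) \<xi>)) = (\<lambda>\<xi>. pair \<xi> (cor (w \<alpha>)) - of_int (int m))"
      proof
        fix \<xi>
        show "f (dot Rpos (inv_into UNIV w) \<xi>) = pair \<xi> (cor (w \<alpha>)) - of_int (int m)"
          unfolding geq using g0 m by (simp add: algebra_simps)
      qed
      then have "(\<lambda>\<xi>. pair \<xi> (cor (w \<alpha>)) - of_int (int m)) \<in> \<Omega>" using gO by simp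
      then show ?thesis using waR True unfolding L_def integral_roots_def by blast
    next
      case False
      define \<beta> where "\<beta> = (\<lambda>i. - w \<alpha> i)"
      have bP: "\<beta> \<in> Rpos" unfolding \<beta>_def by (rule pos_sys(2)[OF rs ps waR False])
      obtain k :: nat where k: "pair \<xi>0 (cor \<beta>) = of_nat k" using d0 bP by (auto elim: Nats_cases)
      obtain n' :: nat where n': "pair \<xi>0 (cor \<alpha>) = of_nat n'" using d0 aP by (auto elim: Nats_cases)
      obtain N1 :: int where N1: "N1 > 0" "pair \<rho> (cor \<alpha>) = of_int N1 / 2"
        using pos_sys(4)[OF rs ps aP] unfolding \<rho>_def by blast
      obtain N2 :: int where N2: "N2 > 0" "pair \<rho> (cor \<beta>) = of_int N2 / 2"
        using pos_sys(4)[OF rs ps bP] unfolding \<rho>_def by blast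
      have c1: "pair \<xi>0 (cor (w \<alpha>)) = - of_nat k" using k cor_neg[OF rs waR, of \<xi>0] unfolding \<beta>_def by (simp add: minus_equation_iff)
      have c2: "pair \<rho> (cor (w \<alpha>)) = - (of_int N2 / 2)" using N2(2) cor_neg[OF rs waR, of \<rho>] unfolding \<beta>_def by (metis minus_minus)
      have E: "- of_nat k - of_int N2 / 2 - of_int N1 / 2 - of_nat n' = (0::'a)"
        using g0 c1 c2 N1(2) n0 n' by simp
      have "(of_int (2 * int k + N2 + N1 + 2 * int n') :: 'a) =
          - 2 * (- of_nat k - of_int N2 / 2 - of_int N1 / 2 - of_nat n')"
        by (simp add: algebra_simps)
      then have "(of_int (2 * int k + N2 + N1 + 2 * int n') :: 'a) = 0" using E by simp
      then have "2 * int k + N2 + N1 + 2 * int n' = 0" by (simp only: of_int_eq_0_iff)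
      then show ?thesis using N1(1) N2(1) by simp
    qed
  qed
  have finL: "finite L" using rs_finite[OF rs] by (auto simp: L_def integral_roots_def)
  have "w ` L = L"
    by (rule endo_inj_surj[OF finL]) (use wL bw in \<open>auto simp: bij_def inj_on_def\<close>)
  then have "w ` simple_roots L = simple_roots L"
    using simple_transfer[of w L] wadd bw by (simp add: bij_def)
  then show ?thesis by (simp add: B_lambda_def L_def)
qed

end
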